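(* If a metric space $(X,d)$ threshold-embeds into $L_2$, then for every $\varepsilon\in(0,1)$ the metric space $(X,d^{1-\varepsilon})$ admits a bi-Lipschitz embedding into a Hilbert space.
   Context: For a metric $d$ and $\theta\in(0,1]$, $d^\theta$ denotes the metric $d^\theta(x,y)=d(x,y)^\theta$. Threshold embedding: $(X,d_X)$ $K$-threshold-embeds into $(Y,d_Y)$ if there is a family of Lipschitz maps $\{\varphi_\tau:X\to Y\}_{\tau>0}$ such that for every $\tau>0$ and all $x,y\in X$, $d_X(x,y)\ge\tau$ implies $d_Y(\varphi_\tau(x),\varphi_\tau(y))\ge \|\varphi_\tau\|_{\mathrm{Lip}}\,\tau/K$; $X$ threshold-embeds into $Y$ if this holds for some $K>0$. *)

theory Defs
  imports "HOL-Analysis.Analysis"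
begin

definition metric_on :: "'a set \<Rightarrow> ('a \<Rightarrow> 'a \<Rightarrow> real) \<Rightarrow> bool" where
  "metric_on X d \<longleftrightarrow>
     (\<forall>x\<in>X. \<forall>y\<in>X. 0 \<le> d x y \<and> (d x y = 0 \<longleftrightarrow> x = y) \<and> d x y = d y x) \<and>
     (\<forall>x\<in>X. \<forall>y\<in>X. \<forall>z\<in>X. d x z \<le> d x y + d y z)"

definition snowflake :: "('a \<Rightarrow> 'a \<Rightarrow> real) \<Rightarrow> real \<Rightarrow> 'a \<Rightarrow> 'a \<Rightarrow> real" where
  "snowflake d \<theta> = (\<lambda>x y. d x y powr \<theta>)"

definition lipschitz_wrt :: "'a set \<Rightarrow> ('a \<Rightarrow> 'a \<Rightarrow> real) \<Rightarrow> ('a \<Rightarrow> 'b::metric_space) \<Rightarrow> bool" where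
  "lipschitz_wrt X d f \<longleftrightarrow> (\<exists>C. \<forall>x\<in>X. \<forall>y\<in>X. dist (f x) (f y) \<le> C * d x y)"

definition lip_norm :: "'a set \<Rightarrow> ('a \<Rightarrow> 'a \<Rightarrow> real) \<Rightarrow> ('a \<Rightarrow> 'b::metric_space) \<Rightarrow> real" where
  "lip_norm X d f = Inf {C. 0 \<le> C \<and> (\<forall>x\<in>X. \<forall>y\<in>X. dist (f x) (f y) \<le> C * d x y)}"

definition threshold_embeds_K ::
  "'a set \<Rightarrow> ('a \<Rightarrow> 'a \<Rightarrow> real) \<Rightarrow> real \<Rightarrow> (real \<Rightarrow> 'a \<Rightarrow> 'b::metric_space) \<Rightarrow> bool" where
  "threshold_embeds_K X d K \<phi> \<longleftrightarrow>
     (\<forall>\<tau>>0. lipschitz_wrt X d (\<phi> \<tau>) \<and> lip_norm X d (\<phi> \<tau>) > 0 \<and>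
        (\<forall>x\<in>X. \<forall>y\<in>X. d x y \<ge> \<tau> \<longrightarrow>
            dist (\<phi> \<tau> x) (\<phi> \<tau> y) \<ge> lip_norm X d (\<phi> \<tau>) * \<tau> / K))"

definition threshold_embeds :: "'a set \<Rightarrow> ('a \<Rightarrow> 'a \<Rightarrow> real) \<Rightarrow> 'b::metric_space itself \<Rightarrow> bool" where
  "threshold_embeds X d T \<longleftrightarrow>
     (\<exists>K>0. \<exists>\<phi> :: real \<Rightarrow> 'a \<Rightarrow> 'b. threshold_embeds_K X d K \<phi>)"

definition ell2 :: "('i \<Rightarrow> real) set" where
  "ell2 = {f. (\<lambda>i. (f i)\<^sup>2) summable_on UNIV}"

definition ell2_dist :: "('i \<Rightarrow> real) \<Rightarrow> ('i \<Rightarrow> real) \<Rightarrow> real" where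
  "ell2_dist f g = sqrt (\<Sum>\<^sub>\<infinity>i. (f i - g i)\<^sup>2)"

definition bilipschitz_into_ell2 ::
  "'a set \<Rightarrow> ('a \<Rightarrow> 'a \<Rightarrow> real) \<Rightarrow> ('a \<Rightarrow> 'i \<Rightarrow> real) \<Rightarrow> bool" where
  "bilipschitz_into_ell2 X \<rho> f \<longleftrightarrow>
     (\<forall>x\<in>X. f x \<in> ell2) \<and>
     (\<exists>c C. 0 < c \<and> (\<forall>x\<in>X. \<forall>y\<in>X. c * \<rho> x y \<le> ell2_dist (f x) (f y) \<and>
                                       ell2_dist (f x) (f y) \<le> C * \<rho> x y))"

end

theory Submission
  imports Defs "HOL-Library.Countable"
begin

definition onset :: "'h::real_inner set \<Rightarrow> bool" where
  "onset B \<longleftrightarrow> (\<forall>b\<in>B. norm b = 1) \<and> (\<forall>b\<in>B. \<forall>c\<in>B. b \<noteq> c \<longrightarrow> inner b c = 0)"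

lemma onset_inner: "onset B \<Longrightarrow> b \<in> B \<Longrightarrow> c \<in> B \<Longrightarrow> inner b c = (if b = c then 1 else 0)"
  unfolding onset_def by (auto simp: dot_square_norm)

lemma onset_inner_sum:
  assumes "onset B" "finite F" "F \<subseteq> B" "b \<in> B"
  shows "inner (\<Sum>c\<in>F. a c *\<^sub>R c) b = (if b \<in> F then a b else 0)"
proof -
  have "inner (\<Sum>c\<in>F. a c *\<^sub>R c) b = (\<Sum>c\<in>F. a c * inner c b)"
    by (simp add: inner_sum_left)
  also have "\<dots> = (\<Sum>c\<in>F. if c = b then a c else 0)"
    using assms by (intro sum.cong) (auto simp: onset_inner)
  also have "\<dots> = (if b \<in> F then a b else 0)"
    using assms(2) by (simp add: sum.delta')
  finally show ?thesis .
qed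

lemma onset_norm_sum:
  assumes "onset B" "finite F" "F \<subseteq> B"
  shows "(norm (\<Sum>c\<in>F. a c *\<^sub>R c))\<^sup>2 = (\<Sum>c\<in>F. (a c)\<^sup>2)"
proof -
  have "(norm (\<Sum>c\<in>F. a c *\<^sub>R c))\<^sup>2 = inner (\<Sum>c\<in>F. a c *\<^sub>R c) (\<Sum>c\<in>F. a c *\<^sub>R c)"
    by (simp add: dot_square_norm)
  also have "\<dots> = (\<Sum>b\<in>F. a b * inner (\<Sum>c\<in>F. a c *\<^sub>R c) b)"
    by (simp add: inner_sum_right)
  also have "\<dots> = (\<Sum>b\<in>F. (a b)\<^sup>2)"
    using assms by (intro sum.cong) (auto simp: onset_inner_sum power2_eq_square subset_iff)
  finally show ?thesis .
qed

lemma bessel: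
  assumes "onset B" "finite F" "F \<subseteq> B"
  shows "(\<Sum>b\<in>F. (inner u b)\<^sup>2) \<le> (norm u)\<^sup>2"
proof -
  define s where "s = (\<Sum>c\<in>F. inner u c *\<^sub>R c)"
  have us: "inner u s = (\<Sum>b\<in>F. (inner u b)\<^sup>2)"
    unfolding s_def by (simp add: inner_sum_right power2_eq_square)
  have ss: "inner s s = (\<Sum>b\<in>F. (inner u b)\<^sup>2)"
    using onset_norm_sum[OF assms, of "\<lambda>c. inner u c"] by (simp add: s_def dot_square_norm)
  have "0 \<le> inner (u - s) (u - s)" by simp
  also have "\<dots> = inner u u - 2 * inner u s + inner s s"
    by (simp add: inner_diff_left inner_diff_right inner_commute)
  finally show ?thesis using us ss by (simp add: dot_square_norm)
qed

lemma coef_sq_summable: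
  assumes "onset B"
  shows "(\<lambda>b. (inner u b)\<^sup>2) summable_on B"
  by (rule nonneg_bdd_above_summable_on) (use bessel[OF assms] in \<open>auto intro!: bdd_aboveI[where M="(norm u)\<^sup>2"]\<close>)

lemma sum_le_has_sum:
  fixes f :: "'a \<Rightarrow> real"
  assumes "(f has_sum s) A" "finite F" "F \<subseteq> A" "\<And>x. x \<in> A \<Longrightarrow> f x \<ge> 0"
  shows "sum f F \<le> s"
  using has_sum_mono_neutral[OF has_sum_finiteI[OF assms(2) refl] assms(1)] assms by auto

lemma coef_vec_summable:
  fixes u :: "'h::{real_inner,complete_space}"
  assumes "onset B"
  shows "(\<lambda>b. inner u b *\<^sub>R b) summable_on B"
proof -
  define Q where "Q b = (inner u b)\<^sup>2" for b
  obtain \<sigma> where hs: "(Q has_sum \<sigma>) B"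
    using coef_sq_summable[OF assms] unfolding Q_def summable_on_def by blast
  have Qnn: "\<And>b. Q b \<ge> 0" by (simp add: Q_def)
  have "\<exists>P. eventually P (finite_subsets_at_top B) \<and>
      (\<forall>F F'. P F \<and> P F' \<longrightarrow> dist (sum (\<lambda>b. inner u b *\<^sub>R b) F) (sum (\<lambda>b. inner u b *\<^sub>R b) F') < e)"
    if "e > 0" for e
  proof -
    obtain F0 where F0: "finite F0" "F0 \<subseteq> B" "dist (sum Q F0) \<sigma> \<le> e\<^sup>2/2"
      using has_sum_finite_approximation[OF hs, of "e\<^sup>2/2"] \<open>e>0\<close> by auto
    define P where "P F \<longleftrightarrow> finite F \<and> F0 \<subseteq> F \<and> F \<subseteq> B" for F
    have evP: "eventually P (finite_subsets_at_top B)"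
      unfolding P_def eventually_finite_subsets_at_top using F0 by blast
    have "dist (sum (\<lambda>b. inner u b *\<^sub>R b) F) (sum (\<lambda>b. inner u b *\<^sub>R b) F') < e"
      if "P F" "P F'" for F F'
    proof -
      define D where "D = (F - F') \<union> (F' - F)"
      define a where "a b = (if b \<in> F then inner u b else - inner u b)" for b
      have fin: "finite F" "finite F'" "finite D" using that by (auto simp: P_def D_def)
      have "sum (\<lambda>b. inner u b *\<^sub>R b) F - sum (\<lambda>b. inner u b *\<^sub>R b) F'
          = sum (\<lambda>b. inner u b *\<^sub>R b) (F - F') - sum (\<lambda>b. inner u b *\<^sub>R b) (F' - F)"
      proof -
        have "sum (\<lambda>b. inner u b *\<^sub>R b) F = sum (\<lambda>b. inner u b *\<^sub>R b) (F - F') + sum (\<lambda>b. inner u b *\<^sub>R b) (F \<inter> F')"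
        proof -
          have "F - (F \<inter> F') = F - F'" by auto
          then show ?thesis using sum.subset_diff[of "F \<inter> F'" F "\<lambda>b. inner u b *\<^sub>R b"] fin by simp
        qed
        moreover have "sum (\<lambda>b. inner u b *\<^sub>R b) F' = sum (\<lambda>b. inner u b *\<^sub>R b) (F' - F) + sum (\<lambda>b. inner u b *\<^sub>R b) (F \<inter> F')"
        proof -
          have "F' - (F \<inter> F') = F' - F" by auto
          then show ?thesis using sum.subset_diff[of "F \<inter> F'" F' "\<lambda>b. inner u b *\<^sub>R b"] fin by simp
        qed
        ultimately show ?thesis by simp
      qed
      also have "\<dots> = sum (\<lambda>b. a b *\<^sub>R b) D"
      proof -
        have "sum (\<lambda>b. a b *\<^sub>R b) D = sum (\<lambda>b. a b *\<^sub>R b) (F - F') + sum (\<lambda>b. a b *\<^sub>R b) (F' - F)"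
          unfolding D_def using fin by (intro sum.union_disjoint) auto
        moreover have "sum (\<lambda>b. a b *\<^sub>R b) (F - F') = sum (\<lambda>b. inner u b *\<^sub>R b) (F - F')"
          by (intro sum.cong) (auto simp: a_def)
        moreover have "sum (\<lambda>b. a b *\<^sub>R b) (F' - F) = - sum (\<lambda>b. inner u b *\<^sub>R b) (F' - F)"
          by (simp add: a_def sum_negf[symmetric])
        ultimately show ?thesis by simp
      qed
      finally have eq: "dist (sum (\<lambda>b. inner u b *\<^sub>R b) F) (sum (\<lambda>b. inner u b *\<^sub>R b) F') = norm (sum (\<lambda>b. a b *\<^sub>R b) D)"
        by (simp add: dist_norm)
      have DB: "D \<subseteq> B" using that by (auto simp: P_def D_def)
      have n1: "(norm (sum (\<lambda>b. a b *\<^sub>R b) D))\<^sup>2 = (\<Sum>b\<in>D. (a b)\<^sup>2)"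
        by (rule onset_norm_sum[OF assms fin(3) DB])
      have n2: "(\<Sum>b\<in>D. (a b)\<^sup>2) = sum Q D" by (intro sum.cong) (auto simp: a_def Q_def)
      have n3: "sum Q D \<le> e\<^sup>2/2"
      proof -
        have disj: "D \<inter> F0 = {}" using that by (auto simp: P_def D_def)
        have "sum Q (D \<union> F0) \<le> \<sigma>"
          by (rule sum_le_has_sum[OF hs]) (use fin F0 DB Qnn in auto)
        moreover have "sum Q (D \<union> F0) = sum Q D + sum Q F0"
          using fin F0 disj by (intro sum.union_disjoint) auto
        moreover have "\<sigma> - sum Q F0 \<le> e\<^sup>2/2"
        proof -
          have "\<bar>sum Q F0 - \<sigma>\<bar> \<le> e\<^sup>2/2" using F0(3) by (simp add: dist_real_def)
          then show ?thesis by linarith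
        qed
        ultimately show ?thesis by linarith
      qed
      have n4: "e\<^sup>2/2 < e\<^sup>2" using \<open>e>0\<close> by simp
      have "(norm (sum (\<lambda>b. a b *\<^sub>R b) D))\<^sup>2 < e\<^sup>2"
        using n1 n2 n3 n4 by linarith
      then have "norm (sum (\<lambda>b. a b *\<^sub>R b) D) < e"
        by (rule power2_less_imp_less) (use \<open>e>0\<close> in simp)
      then show ?thesis using eq by simp
    qed
    then show ?thesis using evP by blast
  qed
  then have "cauchy_filter (filtermap (sum (\<lambda>b. inner u b *\<^sub>R b)) (finite_subsets_at_top B))"
    by (simp add: cauchy_filter_metric_filtermap)
  moreover have "complete (UNIV::'h set)"
    by (meson Cauchy_convergent UNIV_I complete_def convergent_def)
  ultimately obtain L' where "(sum (\<lambda>b. inner u b *\<^sub>R b) \<longlongrightarrow> L') (finite_subsets_at_top B)"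
    using complete_uniform[where S=UNIV] by (force simp add: filterlim_def)
  then show ?thesis
    using summable_on_def has_sum_def by blast
qed

definition maxon :: "'h::real_inner set \<Rightarrow> bool" where
  "maxon B \<longleftrightarrow> onset B \<and> (\<forall>C. onset C \<and> B \<subseteq> C \<longrightarrow> C = B)"

lemma maxon_exists: "\<exists>B::'h::real_inner set. maxon B"
proof -
  have "\<exists>M\<in>{B::'h set. onset B}. \<forall>X\<in>{B. onset B}. M \<subseteq> X \<longrightarrow> X = M"
  proof (rule Zorn_Lemma, intro ballI)
    fix C assume that: "C \<in> chains {B::'h set. onset B}"
    show "\<Union>C \<in> {B. onset B}"
    proof -
      have ch: "chain\<^sub>\<subseteq> C" and sub: "C \<subseteq> {B. onset B}" using that by (auto simp: chains_def)
      show ?thesis unfolding mem_Collect_eq onset_def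
      proof safe
        fix b X assume "b \<in> X" "X \<in> C" then show "norm b = 1" using sub by (auto simp: onset_def)
      next
        fix b c X Y assume h: "b \<in> X" "X \<in> C" "c \<in> Y" "Y \<in> C" "b \<noteq> c"
        from ch h(2,4) have "X \<subseteq> Y \<or> Y \<subseteq> X" by (auto simp: chain_subset_def)
        moreover from sub h have "onset X" "onset Y" by auto
        ultimately show "inner b c = 0" using h unfolding onset_def by blast
      qed
    qed
  qed
  then show ?thesis unfolding maxon_def by blast
qed

lemma parseval:
  fixes u :: "'h::{real_inner,complete_space}"
  assumes "maxon B"
  shows "((\<lambda>b. (inner u b)\<^sup>2) has_sum (norm u)\<^sup>2) B"
proof -
  have on: "onset B" using assms by (simp add: maxon_def)
  define w where "w = infsum (\<lambda>b. inner u b *\<^sub>R b) B"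
  have hw: "((\<lambda>b. inner u b *\<^sub>R b) has_sum w) B"
    unfolding w_def using coef_vec_summable[OF on] by (simp add: summable_iff_has_sum_infsum)
  have wb: "inner w b = inner u b" if "b \<in> B" for b
  proof -
    have "((\<lambda>c. inner (inner u c *\<^sub>R c) b) has_sum inner w b) B"
      by (rule has_sum_bounded_linear[OF bounded_linear_inner_left hw])
    moreover have "((\<lambda>c. inner (inner u c *\<^sub>R c) b) has_sum inner u b) B"
    proof -
      have "((\<lambda>c. inner (inner u c *\<^sub>R c) b) has_sum inner u b) {b}"
        using that on by (intro has_sum_finiteI) (auto simp: onset_def dot_square_norm)
      then show ?thesis
        by (subst (asm) has_sum_cong_neutral[where T=B]) (use that on in \<open>auto simp: onset_inner\<close>)
    qed
    ultimately show ?thesis using has_sum_unique by blast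
  qed
  have "u = w"
  proof (rule ccontr)
    assume "u \<noteq> w"
    define v where "v = (1 / norm (u - w)) *\<^sub>R (u - w)"
    have nv: "norm v = 1" using \<open>u \<noteq> w\<close> by (simp add: v_def)
    have vb: "inner v b = 0" if "b \<in> B" for b
      using wb[OF that] by (simp add: v_def inner_diff_left)
    have vnB: "v \<notin> B"
    proof
      assume "v \<in> B" then have "inner v v = 0" using vb by blast
      then show False using nv by simp
    qed
    have "onset (insert v B)"
      using on nv vb unfolding onset_def by (auto simp: inner_commute)
    then have "insert v B = B" using assms unfolding maxon_def by blast
    then show False using vnB by blast
  qed
  have "((\<lambda>b. inner u (inner u b *\<^sub>R b)) has_sum inner u w) B"
    by (rule has_sum_bounded_linear[OF bounded_linear_inner_right hw])
  then show ?thesis using \<open>u = w\<close> by (simp add: power2_eq_square power2_norm_eq_inner[symmetric])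
qed

lemma prodPiE_nonneg_summable:
  fixes h :: "'j \<Rightarrow> real" and n :: nat
  assumes hs: "(h has_sum H) J" and nn: "\<And>j. j \<in> J \<Longrightarrow> h j \<ge> 0"
  shows "(\<lambda>g. \<Prod>i<n. h (g i)) summable_on PiE {..<n} (\<lambda>_. J)"
proof (rule nonneg_bdd_above_summable_on)
  show "0 \<le> (\<Prod>i<n. h (g i))" if "g \<in> PiE {..<n} (\<lambda>_. J)" for g
    using that nn by (intro prod_nonneg) auto
  show "bdd_above (sum (\<lambda>g. \<Prod>i<n. h (g i)) ` {F. F \<subseteq> PiE {..<n} (\<lambda>_. J) \<and> finite F})"
  proof (rule bdd_aboveI2)
    fix F assume F: "F \<in> {F. F \<subseteq> PiE {..<n} (\<lambda>_. J) \<and> finite F}"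
    define G where "G = (\<Union>g\<in>F. g ` {..<n})"
    have finG: "finite G" using F unfolding G_def by (intro finite_UN_I) auto
    have GJ: "G \<subseteq> J" using F by (auto simp: G_def PiE_iff)
    have FG: "F \<subseteq> PiE {..<n} (\<lambda>_. G)" using F by (auto simp: G_def PiE_iff)
    have "sum (\<lambda>g. \<Prod>i<n. h (g i)) F \<le> sum (\<lambda>g. \<Prod>i<n. h (g i)) (PiE {..<n} (\<lambda>_. G))"
      by (rule sum_mono2) (use finG FG GJ nn in \<open>auto intro!: finite_PiE prod_nonneg simp: PiE_iff subset_iff\<close>)
    also have "\<dots> = (\<Prod>i<n. \<Sum>y\<in>G. h y)"
      by (subst prod_sum_PiE) (use finG in auto)
    also have "\<dots> = (sum h G) ^ n" by simp
    also have "\<dots> \<le> H ^ n"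
    proof (rule power_mono)
      show "sum h G \<le> H"
        using has_sum_mono_neutral[OF has_sum_finiteI[OF finG refl] hs] GJ nn by auto
      show "0 \<le> sum h G" using GJ nn by (intro sum_nonneg) auto
    qed
    finally show "sum (\<lambda>g. \<Prod>i<n. h (g i)) F \<le> H ^ n" .
  qed
qed

lemma prodPiE_has_sum:
  fixes q :: "'j \<Rightarrow> real" and n :: nat
  assumes qs: "q summable_on J"
  shows "((\<lambda>g. \<Prod>i<n. q (g i)) has_sum (infsum q J) ^ n) (PiE {..<n} (\<lambda>_. J))"
proof -
  have aq: "(\<lambda>j. norm (q j)) summable_on J"
    using qs summable_on_iff_abs_summable_on_real by blast
  have "(\<lambda>g. \<Prod>i<n. norm (q (g i))) summable_on PiE {..<n} (\<lambda>_. J)"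
    by (rule prodPiE_nonneg_summable[OF aq[unfolded summable_iff_has_sum_infsum]]) auto
  then have "(\<lambda>g. norm (\<Prod>i<n. q (g i))) summable_on PiE {..<n} (\<lambda>_. J)"
    by (simp add: abs_prod)
  then have sm: "(\<lambda>g. \<Prod>i<n. q (g i)) summable_on PiE {..<n} (\<lambda>_. J)"
    using summable_on_iff_abs_summable_on_real by blast
  have "infsum (\<lambda>g. \<Prod>i<n. q (g i)) (PiE {..<n} (\<lambda>_. J)) = (\<Prod>i<n. infsum q J)"
    by (rule infsum_prod_PiE_abs[where f="\<lambda>_. q", simplified]) (use aq in auto)
  then show ?thesis using sm by (simp add: summable_iff_has_sum_infsum)
qed

lemma abs_mult_le_sq: fixes x y :: real shows "\<bar>x * y\<bar> \<le> (x\<^sup>2 + y\<^sup>2) / 2"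
proof -
  have "(\<bar>x\<bar> - \<bar>y\<bar>)\<^sup>2 = x\<^sup>2 + y\<^sup>2 - 2 * \<bar>x * y\<bar>"
    by (simp add: power2_eq_square abs_mult algebra_simps)
  moreover have "0 \<le> (\<bar>x\<bar> - \<bar>y\<bar>)\<^sup>2" by simp
  ultimately have "0 \<le> x\<^sup>2 + y\<^sup>2 - 2 * \<bar>x * y\<bar>" by simp
  then show ?thesis by (simp add: field_simps)
qed

definition IX :: "'j set \<Rightarrow> (nat \<times> (nat \<Rightarrow> 'j)) set" where
  "IX J = Sigma UNIV (\<lambda>n. PiE {..<n} (\<lambda>_. J))"

definition gm :: "('j \<Rightarrow> real) \<Rightarrow> nat \<times> (nat \<Rightarrow> 'j) \<Rightarrow> real" where
  "gm a = (\<lambda>(n,g). (\<Prod>i<n. a (g i)) / sqrt (fact n))"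

lemma exp_has_sum: "((\<lambda>n. x ^ n / fact n) has_sum exp (x::real)) UNIV"
proof -
  have "((\<lambda>n. x ^ n /\<^sub>R fact n) has_sum exp x) UNIV"
    by (rule norm_summable_imp_has_sum[OF summable_norm_exp exp_converges])
  then show ?thesis by (simp add: divide_inverse mult.commute)
qed

lemma gm_prod: "gm a (n, g) * gm c (n, g) = (\<Prod>i<n. a (g i) * c (g i)) / fact n"
  by (simp add: gm_def prod.distrib)

lemma gm_sq_has_sum:
  fixes a :: "'j \<Rightarrow> real"
  assumes as: "(\<lambda>j. (a j)\<^sup>2) summable_on J"
  shows "((\<lambda>p. (gm a p)\<^sup>2) has_sum exp (infsum (\<lambda>j. (a j)\<^sup>2) J)) (IX J)"
proof -
  define A where "A = infsum (\<lambda>j. (a j)\<^sup>2) J"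
  have inner: "((\<lambda>g. (gm a (n, g))\<^sup>2) has_sum A ^ n / fact n) (PiE {..<n} (\<lambda>_. J))" for n
  proof -
    have "((\<lambda>g. \<Prod>i<n. (a (g i))\<^sup>2) has_sum A ^ n) (PiE {..<n} (\<lambda>_. J))"
      unfolding A_def by (rule prodPiE_has_sum[OF as])
    then have "((\<lambda>g. (\<Prod>i<n. (a (g i))\<^sup>2) * (1 / fact n)) has_sum A ^ n * (1 / fact n)) (PiE {..<n} (\<lambda>_. J))"
      by (rule has_sum_cmult_left)
    moreover have "(gm a (n, g))\<^sup>2 = (\<Prod>i<n. (a (g i))\<^sup>2) * (1 / fact n)" for g
      using gm_prod[of a n g a] by (simp add: power2_eq_square)
    ultimately show ?thesis by simp
  qed
  show ?thesis unfolding A_def[symmetric] IX_def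
  proof (rule has_sum_SigmaI[where g="\<lambda>n. A ^ n / fact n"])
    show "((\<lambda>y. (gm a (n, y))\<^sup>2) has_sum A ^ n / fact n) (PiE {..<n} (\<lambda>_. J))" for n
      by (rule inner)
    show "((\<lambda>n. A ^ n / fact n) has_sum exp A) UNIV" by (rule exp_has_sum)
    show "(\<lambda>p. (gm a p)\<^sup>2) summable_on Sigma UNIV (\<lambda>n. PiE {..<n} (\<lambda>_. J))"
      by (rule summable_on_SigmaI[where g="\<lambda>n. A ^ n / fact n"]) 
         (use inner exp_has_sum in \<open>auto simp: summable_on_def\<close>)
  qed
qed

lemma gm_cross_has_sum:
  fixes a c :: "'j \<Rightarrow> real"
  assumes as: "(\<lambda>j. (a j)\<^sup>2) summable_on J" and cs: "(\<lambda>j. (c j)\<^sup>2) summable_on J"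
  shows "((\<lambda>p. gm a p * gm c p) has_sum exp (infsum (\<lambda>j. a j * c j) J)) (IX J)"
proof -
  define P where "P = infsum (\<lambda>j. a j * c j) J"
  have acs: "(\<lambda>j. a j * c j) summable_on J"
  proof -
    have "(\<lambda>j. ((a j)\<^sup>2 + (c j)\<^sup>2) * (1/2)) summable_on J"
      by (rule summable_on_cmult_left[OF summable_on_add[OF as cs]])
    then have "(\<lambda>j. ((a j)\<^sup>2 + (c j)\<^sup>2) / 2) summable_on J" by simp
    moreover have "norm (a j * c j) \<le> ((a j)\<^sup>2 + (c j)\<^sup>2) / 2" for j
      using abs_mult_le_sq by simp
    ultimately have "(\<lambda>j. norm (a j * c j)) summable_on J"
      by (rule summable_on_comparison_test) auto
    then show ?thesis using summable_on_iff_abs_summable_on_real by blast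
  qed
  have inner: "((\<lambda>g. gm a (n, g) * gm c (n, g)) has_sum P ^ n / fact n) (PiE {..<n} (\<lambda>_. J))" for n
  proof -
    have "((\<lambda>g. \<Prod>i<n. a (g i) * c (g i)) has_sum P ^ n) (PiE {..<n} (\<lambda>_. J))"
      unfolding P_def by (rule prodPiE_has_sum[OF acs])
    then have "((\<lambda>g. (\<Prod>i<n. a (g i) * c (g i)) * (1 / fact n)) has_sum P ^ n * (1 / fact n)) (PiE {..<n} (\<lambda>_. J))"
      by (rule has_sum_cmult_left)
    then show ?thesis by (simp add: gm_prod)
  qed
  have sm: "(\<lambda>p. gm a p * gm c p) summable_on IX J"
  proof -
    have "(\<lambda>p. ((gm a p)\<^sup>2 + (gm c p)\<^sup>2) * (1/2)) summable_on IX J"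
      by (rule summable_on_cmult_left[OF summable_on_add[OF has_sum_imp_summable[OF gm_sq_has_sum[OF as]] has_sum_imp_summable[OF gm_sq_has_sum[OF cs]]]])
    then have "(\<lambda>p. ((gm a p)\<^sup>2 + (gm c p)\<^sup>2) / 2) summable_on IX J" by simp
    moreover have "norm (gm a p * gm c p) \<le> ((gm a p)\<^sup>2 + (gm c p)\<^sup>2) / 2" for p
      using abs_mult_le_sq by simp
    ultimately have "(\<lambda>p. norm (gm a p * gm c p)) summable_on IX J"
      by (rule summable_on_comparison_test) auto
    then show ?thesis using summable_on_iff_abs_summable_on_real by blast
  qed
  show ?thesis unfolding P_def[symmetric]
    using has_sum_SigmaI[where f="\<lambda>p. gm a p * gm c p" and g="\<lambda>n. P ^ n / fact n",
        OF inner exp_has_sum sm[unfolded IX_def]] by (simp add: IX_def)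
qed

lemma prod_summable:
  fixes a c :: "'j \<Rightarrow> real"
  assumes as: "(\<lambda>j. (a j)\<^sup>2) summable_on J" and cs: "(\<lambda>j. (c j)\<^sup>2) summable_on J"
  shows "(\<lambda>j. a j * c j) summable_on J"
proof -
  have "(\<lambda>j. ((a j)\<^sup>2 + (c j)\<^sup>2) * (1/2)) summable_on J"
    by (rule summable_on_cmult_left[OF summable_on_add[OF as cs]])
  then have "(\<lambda>j. ((a j)\<^sup>2 + (c j)\<^sup>2) / 2) summable_on J" by simp
  moreover have "norm (a j * c j) \<le> ((a j)\<^sup>2 + (c j)\<^sup>2) / 2" for j
    using abs_mult_le_sq by simp
  ultimately have "(\<lambda>j. norm (a j * c j)) summable_on J"
    by (rule summable_on_comparison_test) auto
  then show ?thesis using summable_on_iff_abs_summable_on_real by blast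
qed

definition Phi :: "'j set \<Rightarrow> ('j \<Rightarrow> real) \<Rightarrow> nat \<times> (nat \<Rightarrow> 'j) \<Rightarrow> real" where
  "Phi J a p = exp (- infsum (\<lambda>j. (a j)\<^sup>2) J / 2) * gm a p"

lemma Phi_diff_has_sum:
  fixes a c :: "'j \<Rightarrow> real"
  assumes as: "(\<lambda>j. (a j)\<^sup>2) summable_on J" and cs: "(\<lambda>j. (c j)\<^sup>2) summable_on J"
  shows "((\<lambda>p. (Phi J a p - Phi J c p)\<^sup>2) has_sum (2 - 2 * exp (- infsum (\<lambda>j. (a j - c j)\<^sup>2) J / 2))) (IX J)"
proof -
  define A where "A = infsum (\<lambda>j. (a j)\<^sup>2) J"
  define C where "C = infsum (\<lambda>j. (c j)\<^sup>2) J"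
  define P where "P = infsum (\<lambda>j. a j * c j) J"
  have hA: "((\<lambda>j. (a j)\<^sup>2) has_sum A) J" using as by (simp add: A_def summable_iff_has_sum_infsum)
  have hC: "((\<lambda>j. (c j)\<^sup>2) has_sum C) J" using cs by (simp add: C_def summable_iff_has_sum_infsum)
  have hP: "((\<lambda>j. a j * c j) has_sum P) J"
    using prod_summable[OF as cs] by (simp add: P_def summable_iff_has_sum_infsum)
  have "((\<lambda>j. (a j)\<^sup>2 + (c j)\<^sup>2 + (-2) * (a j * c j)) has_sum A + C + (-2) * P) J"
    by (intro has_sum_add hA hC has_sum_cmult_right hP)
  then have "((\<lambda>j. (a j - c j)\<^sup>2) has_sum A + C - 2 * P) J"
    by (simp add: power2_eq_square algebra_simps)
  then have D: "infsum (\<lambda>j. (a j - c j)\<^sup>2) J = A + C - 2 * P" by (rule infsumI)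
  have g1: "((\<lambda>p. exp (- A) * (gm a p)\<^sup>2) has_sum exp (- A) * exp A) (IX J)"
    by (rule has_sum_cmult_right) (use gm_sq_has_sum[OF as] in \<open>simp add: A_def\<close>)
  have g2: "((\<lambda>p. exp (- C) * (gm c p)\<^sup>2) has_sum exp (- C) * exp C) (IX J)"
    by (rule has_sum_cmult_right) (use gm_sq_has_sum[OF cs] in \<open>simp add: C_def\<close>)
  have g3: "((\<lambda>p. (-2 * exp (- A / 2) * exp (- C / 2)) * (gm a p * gm c p)) has_sum
      (-2 * exp (- A / 2) * exp (- C / 2)) * exp P) (IX J)"
    by (rule has_sum_cmult_right) (use gm_cross_has_sum[OF as cs] in \<open>simp add: P_def\<close>)
  have "((\<lambda>p. exp (- A) * (gm a p)\<^sup>2 + exp (- C) * (gm c p)\<^sup>2 + (-2 * exp (- A / 2) * exp (- C / 2)) * (gm a p * gm c p))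
      has_sum (exp (- A) * exp A + exp (- C) * exp C + (-2 * exp (- A / 2) * exp (- C / 2)) * exp P)) (IX J)"
    by (intro has_sum_add g1 g2 g3)
  moreover have "(Phi J a p - Phi J c p)\<^sup>2 = exp (- A) * (gm a p)\<^sup>2 + exp (- C) * (gm c p)\<^sup>2 + (-2 * exp (- A / 2) * exp (- C / 2)) * (gm a p * gm c p)" for p
  proof -
    have e1: "exp (- A) = exp (- A / 2) * exp (- A / 2)" by (simp add: exp_add[symmetric])
    have e2: "exp (- C) = exp (- C / 2) * exp (- C / 2)" by (simp add: exp_add[symmetric])
    show ?thesis unfolding Phi_def A_def[symmetric] C_def[symmetric] e1 e2
      by (simp add: power2_eq_square algebra_simps)
  qed
  moreover have "exp (- A) * exp A + exp (- C) * exp C + (-2 * exp (- A / 2) * exp (- C / 2)) * exp P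
      = 2 - 2 * exp (- (A + C - 2 * P) / 2)"
    by (simp add: exp_add[symmetric] exp_minus_inverse field_simps)
  ultimately show ?thesis unfolding D by simp
qed

lemma geom_has_sum:
  fixes r :: real
  assumes "0 \<le> r" "r < 1"
  shows "((\<lambda>j::nat. c * r ^ j) has_sum c / (1 - r)) UNIV"
proof -
  have "((\<lambda>j::nat. r ^ j) has_sum 1 / (1 - r)) UNIV"
    by (rule sums_nonneg_imp_has_sum) (use assms geometric_sums[of r] in auto)
  from has_sum_cmult_right[OF this, of c] show ?thesis by simp
qed

lemma scale_sum:
  fixes t :: "int \<Rightarrow> real" and \<alpha> \<beta> d :: real
  assumes ab: "\<alpha> > 0" "\<beta> > 0" "\<alpha> + \<beta> = 2" and d: "d > 0"
    and t0: "\<And>k. 0 \<le> t k" and t1: "\<And>k. t k \<le> 2 * 2 powr (\<alpha> * k)"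
    and t2: "\<And>k. t k \<le> d\<^sup>2 * 2 powr (- \<beta> * k)"
  shows "t summable_on UNIV \<and> infsum t UNIV \<le> (2 / (1 - 2 powr (- \<alpha>)) + 1 / (1 - 2 powr (- \<beta>))) * d powr \<alpha>"
proof -
  define m where "m = \<lfloor>log 2 d\<rfloor>"
  have hm1: "2 powr m \<le> d"
  proof -
    have "2 powr m \<le> 2 powr (log 2 d)" unfolding m_def by (intro powr_mono) auto
    then show ?thesis using d by simp
  qed
  have hm2: "d < 2 powr (m + 1)"
  proof -
    have "2 powr (log 2 d) < 2 powr (m + 1)" unfolding m_def by (intro powr_less_mono) linarith+
    then show ?thesis using d by simp
  qed
  define r1 where "r1 = 2 powr (- \<alpha>)"
  define r2 where "r2 = 2 powr (- \<beta>)"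
  have r1: "0 \<le> r1" "r1 < 1" using ab by (auto simp: r1_def intro!: powr_less_one)
  have r2: "0 \<le> r2" "r2 < 1" using ab by (auto simp: r2_def intro!: powr_less_one)
  define h where "h k = (if k \<le> m then 2 * 2 powr (\<alpha> * k) else d\<^sup>2 * 2 powr (- \<beta> * k))" for k :: int
  define S1 where "S1 = 2 * 2 powr (\<alpha> * m) / (1 - r1)"
  define S2 where "S2 = d\<^sup>2 * 2 powr (- \<beta> * (m + 1)) / (1 - r2)"
  have L: "(h has_sum S1) {..m}"
  proof -
    have im: "(\<lambda>j::nat. m - int j) ` UNIV = {..m}"
    proof (intro set_eqI iffI)
      fix k assume "k \<in> {..m}" then have "k = m - int (nat (m - k))" by auto
      then show "k \<in> range (\<lambda>j::nat. m - int j)" by blast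
    qed auto
    have inj: "inj_on (\<lambda>j::nat. m - int j) UNIV" by (auto simp: inj_on_def)
    have "(h \<circ> (\<lambda>j::nat. m - int j)) = (\<lambda>j. (2 * 2 powr (\<alpha> * m)) * r1 ^ j)"
    proof
      fix j :: nat
      have "2 powr (\<alpha> * real_of_int (m - int j)) = 2 powr (\<alpha> * m) * 2 powr (- \<alpha> * j)"
        by (simp add: powr_add[symmetric] algebra_simps)
      moreover have "r1 ^ j = 2 powr (- \<alpha> * j)" unfolding r1_def by (simp add: powr_power mult.commute)
      ultimately show "(h \<circ> (\<lambda>j::nat. m - int j)) j = (2 * 2 powr (\<alpha> * m)) * r1 ^ j"
        by (simp add: h_def)
    qed
    moreover have "((\<lambda>j. (2 * 2 powr (\<alpha> * m)) * r1 ^ j) has_sum S1) UNIV"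
      unfolding S1_def by (rule geom_has_sum[OF r1])
    ultimately show ?thesis using has_sum_reindex[OF inj, of h S1] im by simp
  qed
  have R: "(h has_sum S2) {m<..}"
  proof -
    have im: "(\<lambda>j::nat. m + 1 + int j) ` UNIV = {m<..}"
    proof (intro set_eqI iffI)
      fix k assume "k \<in> {m<..}" then have "k = m + 1 + int (nat (k - m - 1))" by auto
      then show "k \<in> range (\<lambda>j::nat. m + 1 + int j)" by blast
    qed auto
    have inj: "inj_on (\<lambda>j::nat. m + 1 + int j) UNIV" by (auto simp: inj_on_def)
    have "(h \<circ> (\<lambda>j::nat. m + 1 + int j)) = (\<lambda>j. (d\<^sup>2 * 2 powr (- \<beta> * (m + 1))) * r2 ^ j)"
    proof
      fix j :: nat
      have "2 powr (- \<beta> * real_of_int (m + 1 + int j)) = 2 powr (- \<beta> * (m + 1)) * 2 powr (- \<beta> * j)"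
        by (simp add: powr_add[symmetric] algebra_simps)
      moreover have "r2 ^ j = 2 powr (- \<beta> * j)" unfolding r2_def by (simp add: powr_power mult.commute)
      ultimately show "(h \<circ> (\<lambda>j::nat. m + 1 + int j)) j = (d\<^sup>2 * 2 powr (- \<beta> * (m + 1))) * r2 ^ j"
        by (simp add: h_def)
    qed
    moreover have "((\<lambda>j. (d\<^sup>2 * 2 powr (- \<beta> * (m + 1))) * r2 ^ j) has_sum S2) UNIV"
      unfolding S2_def by (rule geom_has_sum[OF r2])
    ultimately show ?thesis using has_sum_reindex[OF inj, of h S2] im by simp
  qed
  have H: "(h has_sum (S1 + S2)) UNIV"
  proof -
    have "(h has_sum (S1 + S2)) ({..m} \<union> {m<..})" by (rule has_sum_Un_disjoint[OF L R]) auto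
    moreover have "{..m} \<union> {m<..} = (UNIV :: int set)" by auto
    ultimately show ?thesis by simp
  qed
  have th: "t k \<le> h k" for k using t1 t2 by (simp add: h_def)
  have ts: "t summable_on UNIV"
    by (rule summable_on_comparison_test[OF has_sum_imp_summable[OF H]]) (use th t0 in auto)
  have "infsum t UNIV \<le> S1 + S2"
    using has_sum_mono[OF ts[unfolded summable_iff_has_sum_infsum] H] th by auto
  also have "S1 \<le> 2 / (1 - r1) * d powr \<alpha>"
  proof -
    have "2 powr (\<alpha> * m) = (2 powr m) powr \<alpha>" by (simp add: powr_powr mult.commute)
    also have "\<dots> \<le> d powr \<alpha>" by (rule powr_mono2) (use ab hm1 in auto)
    finally show ?thesis unfolding S1_def using r1 by (simp add: divide_right_mono)
  qed
  also have "S2 \<le> 1 / (1 - r2) * d powr \<alpha>"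
  proof -
    have "2 powr (- \<beta> * (m + 1)) = (2 powr (m + 1)) powr (- \<beta>)" by (simp add: powr_powr mult.commute)
    also have "\<dots> \<le> d powr (- \<beta>)" by (rule powr_mono2') (use ab hm2 d in auto)
    finally have "d\<^sup>2 * 2 powr (- \<beta> * (m + 1)) \<le> d\<^sup>2 * d powr (- \<beta>)" by (simp add: mult_left_mono)
    also have "d\<^sup>2 * d powr (- \<beta>) = d powr \<alpha>"
    proof -
      have "d\<^sup>2 = d powr 2" using d by (simp add: powr_realpow')
      moreover have "2 - \<beta> = \<alpha>" using ab by simp
      ultimately show ?thesis by (simp add: powr_add[symmetric])
    qed
    finally show ?thesis unfolding S2_def using r2 by (simp add: divide_right_mono)
  qed
  finally show ?thesis using ts by (simp add: r1_def r2_def algebra_simps)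
qed

lemma pair_inj_exists: "\<exists>q :: ('a \<times> nat) \<times> ('a \<times> nat) \<Rightarrow> 'a \<times> nat. inj q"
proof -
  have inf: "\<not> finite (UNIV :: ('a \<times> nat) set)"
    by (simp add: finite_prod)
  obtain q where "bij_betw q ((UNIV :: ('a \<times> nat) set) \<times> (UNIV :: ('a \<times> nat) set)) (UNIV :: ('a \<times> nat) set)"
    using card_of_ordIso card_of_Times_same_infinite[OF inf] by blast
  then show ?thesis by (auto simp: bij_betw_def)
qed

primrec enc :: "(('a \<times> nat) \<times> ('a \<times> nat) \<Rightarrow> 'a \<times> nat) \<Rightarrow> ('j \<Rightarrow> 'a \<times> nat) \<Rightarrow> nat \<Rightarrow> (nat \<Rightarrow> 'j) \<Rightarrow> 'a \<times> nat" where
  "enc q e 0 g = (undefined, 0)"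
| "enc q e (Suc n) g = q (e (g n), enc q e n g)"

lemma enc_inj:
  assumes q: "inj q" and e: "inj_on e J"
  shows "(\<forall>i<n. g i \<in> J \<and> g' i \<in> J) \<longrightarrow> enc q e n g = enc q e n g' \<longrightarrow> (\<forall>i<n. g i = g' i)"
proof (induction n)
  case 0 then show ?case by simp
next
  case (Suc n)
  show ?case
  proof (intro impI)
    assume h: "\<forall>i<Suc n. g i \<in> J \<and> g' i \<in> J" "enc q e (Suc n) g = enc q e (Suc n) g'"
    have "(e (g n), enc q e n g) = (e (g' n), enc q e n g')"
      by (rule injD[OF q]) (use h(2) in simp)
    then have 1: "e (g n) = e (g' n)" and 2: "enc q e n g = enc q e n g'" by auto
    have "g n = g' n" by (rule inj_onD[OF e 1]) (use h(1) in auto)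
    moreover have "\<forall>i<n. g i = g' i" using Suc.IH h(1) 2 by simp
    ultimately have "g n = g' n" "\<forall>i<n. g i = g' i" by auto
    then show "\<forall>i<Suc n. g i = g' i" using less_Suc_eq by auto
  qed
qed

definition code :: "(('a \<times> nat) \<times> ('a \<times> nat) \<Rightarrow> 'a \<times> nat) \<Rightarrow> ('j \<Rightarrow> 'a \<times> nat) \<Rightarrow> int \<times> nat \<times> (nat \<Rightarrow> 'j) \<Rightarrow> 'a \<times> nat" where
  "code q e = (\<lambda>(k, n, g). q ((undefined, to_nat (k, n)), enc q e n g))"

lemma code_inj:
  assumes q: "inj q" and e: "inj_on e J"
  shows "inj_on (code q e) (UNIV \<times> Sigma UNIV (\<lambda>n. PiE {..<n} (\<lambda>_. J)))"
proof (rule inj_onI)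
  fix x y
  assume x: "x \<in> UNIV \<times> Sigma UNIV (\<lambda>n. PiE {..<n} (\<lambda>_. J))" and y: "y \<in> UNIV \<times> Sigma UNIV (\<lambda>n. PiE {..<n} (\<lambda>_. J))"
    and eqxy: "code q e x = code q e y"
  obtain k n g where xe: "x = (k, n, g)" by (cases x) auto
  obtain k' n' g' where ye: "y = (k', n', g')" by (cases y) auto
  have g: "g \<in> PiE {..<n} (\<lambda>_. J)" and g': "g' \<in> PiE {..<n'} (\<lambda>_. J)" using x y xe ye by auto
  have eq: "code q e (k, n, g) = code q e (k', n', g')" using eqxy xe ye by simp
  have "(((undefined::'a), to_nat (k, n)), enc q e n g) = (((undefined::'a), to_nat (k', n')), enc q e n' g')"
    by (rule injD[OF q]) (use eq in \<open>simp add: code_def\<close>)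
  then have "to_nat (k, n) = to_nat (k', n')" "enc q e n g = enc q e n' g'" by auto
  then have kn: "k = k'" "n = n'" by auto
  then have "\<forall>i<n. g i = g' i" using enc_inj[OF q e, of n g g'] g g' \<open>enc q e n g = enc q e n' g'\<close>
    by (auto simp: PiE_iff)
  then have "g = g'" using g g' kn by (intro PiE_ext[OF g]) (auto simp: PiE_iff)
  then show "x = y" using kn xe ye by simp
qed

locale core =
  fixes X :: "'a set" and d :: "'a \<Rightarrow> 'a \<Rightarrow> real" and \<epsilon> K :: real
    and \<psi> :: "int \<Rightarrow> 'a \<Rightarrow> 'h::{real_inner,complete_space}" and B :: "'h set"
  assumes met: "metric_on X d" and eps: "0 < \<epsilon>" "\<epsilon> < 1" and Kpos: "K > 0" and mB: "maxon B"
    and \<psi>_lip: "\<And>k x y. x \<in> X \<Longrightarrow> y \<in> X \<Longrightarrow> norm (\<psi> k x - \<psi> k y) \<le> d x y"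
    and \<psi>_low: "\<And>k x y. x \<in> X \<Longrightarrow> y \<in> X \<Longrightarrow> d x y \<ge> 2 powr k \<Longrightarrow> norm (\<psi> k x - \<psi> k y) \<ge> 2 powr k / K"
begin

definition "B' = {b\<in>B. \<exists>k. \<exists>x\<in>X. inner (\<psi> k x) b \<noteq> 0}"
definition "coef k x = (\<lambda>b. inner (\<psi> k x) b / 2 powr k)"
definition "Gm x = (\<lambda>(k::int, p). 2 powr (real_of_int k * (1 - \<epsilon>)) * Phi B' (coef k x) p)"
definition "tt x y k = (2 powr (real_of_int k * (1 - \<epsilon>)))\<^sup>2 *
   (2 - 2 * exp (- ((norm (\<psi> k x - \<psi> k y))\<^sup>2 / (2 powr k)\<^sup>2) / 2))"

lemma B'_sub: "B' \<subseteq> B" by (auto simp: B'_def)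

lemma coef_summable: "(\<lambda>b. (coef k x b)\<^sup>2) summable_on B'"
proof -
  have on: "onset B" using mB by (simp add: maxon_def)
  have "(\<lambda>b. (inner (\<psi> k x) b)\<^sup>2) summable_on B" by (rule coef_sq_summable[OF on])
  then have "(\<lambda>b. (inner (\<psi> k x) b)\<^sup>2 * (1 / (2 powr k)\<^sup>2)) summable_on B"
    by (rule summable_on_cmult_left)
  then have "(\<lambda>b. (coef k x b)\<^sup>2) summable_on B"
    by (simp add: coef_def power_divide)
  then show ?thesis by (rule summable_on_subset_banach[OF _ B'_sub])
qed

lemma coef_diff:
  assumes "x \<in> X" "y \<in> X"
  shows "infsum (\<lambda>b. (coef k x b - coef k y b)\<^sup>2) B' = (norm (\<psi> k x - \<psi> k y))\<^sup>2 / (2 powr k)\<^sup>2"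
proof -
  define u where "u = \<psi> k x - \<psi> k y"
  have "((\<lambda>b. (inner u b)\<^sup>2) has_sum (norm u)\<^sup>2) B" by (rule parseval[OF mB])
  moreover have "inner u b = 0" if "b \<in> B - B'" for b
    using that assms by (auto simp: B'_def u_def inner_diff_left)
  ultimately have "((\<lambda>b. (inner u b)\<^sup>2) has_sum (norm u)\<^sup>2) B'"
    using B'_sub by (subst has_sum_cong_neutral[where T=B]) auto
  then have "((\<lambda>b. (inner u b)\<^sup>2 * (1 / (2 powr k)\<^sup>2)) has_sum (norm u)\<^sup>2 * (1 / (2 powr k)\<^sup>2)) B'"
    by (rule has_sum_cmult_left)
  moreover have "(inner u b)\<^sup>2 * (1 / (2 powr k)\<^sup>2) = (coef k x b - coef k y b)\<^sup>2" for b
  proof -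
    have "(inner u b)\<^sup>2 * (1 / (2 powr k)\<^sup>2) = ((inner (\<psi> k x) b - inner (\<psi> k y) b) / 2 powr k)\<^sup>2"
      by (simp add: u_def inner_diff_left power_divide)
    also have "\<dots> = (coef k x b - coef k y b)\<^sup>2"
      by (simp add: coef_def diff_divide_distrib)
    finally show ?thesis .
  qed
  ultimately show ?thesis by (simp add: infsumI u_def)
qed

lemma per_k:
  assumes "x \<in> X" "y \<in> X"
  shows "((\<lambda>p. (Gm x (k, p) - Gm y (k, p))\<^sup>2) has_sum tt x y k) (IX B')"
proof -
  define w where "w = 2 powr (real_of_int k * (1 - \<epsilon>))"
  have "((\<lambda>p. (Phi B' (coef k x) p - Phi B' (coef k y) p)\<^sup>2) has_sum
     (2 - 2 * exp (- infsum (\<lambda>b. (coef k x b - coef k y b)\<^sup>2) B' / 2))) (IX B')"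
    by (rule Phi_diff_has_sum[OF coef_summable coef_summable])
  then have "((\<lambda>p. w\<^sup>2 * (Phi B' (coef k x) p - Phi B' (coef k y) p)\<^sup>2) has_sum
     w\<^sup>2 * (2 - 2 * exp (- infsum (\<lambda>b. (coef k x b - coef k y b)\<^sup>2) B' / 2))) (IX B')"
    by (rule has_sum_cmult_right)
  moreover have "w\<^sup>2 * (Phi B' (coef k x) p - Phi B' (coef k y) p)\<^sup>2 = (Gm x (k, p) - Gm y (k, p))\<^sup>2" for p
    by (simp add: Gm_def w_def power_mult_distrib right_diff_distrib[symmetric])
  ultimately show ?thesis using coef_diff[OF assms] by (simp add: tt_def w_def)
qed

lemma w_sq: "(2 powr (real_of_int k * (1 - \<epsilon>)))\<^sup>2 = 2 powr (2 * (1 - \<epsilon>) * k)"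
  by (simp add: power2_eq_square powr_add[symmetric] algebra_simps)

lemma tt_bounds:
  assumes "x \<in> X" "y \<in> X"
  shows "0 \<le> tt x y k" "tt x y k \<le> 2 * 2 powr (2 * (1 - \<epsilon>) * k)"
    "tt x y k \<le> (d x y)\<^sup>2 * 2 powr (- (2 * \<epsilon>) * k)"
proof -
  define D where "D = (norm (\<psi> k x - \<psi> k y))\<^sup>2 / (2 powr k)\<^sup>2"
  have tt: "tt x y k = 2 powr (2 * (1 - \<epsilon>) * k) * (2 - 2 * exp (- D / 2))"
    by (simp add: tt_def D_def w_sq)
  have D0: "D \<ge> 0" by (simp add: D_def)
  have e1: "exp (- D / 2) \<le> 1" using D0 by simp
  have e2: "2 - 2 * exp (- D / 2) \<le> D" using exp_ge_add_one_self[of "- D / 2"] by simp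
  show "0 \<le> tt x y k" unfolding tt using e1 by simp
  show "tt x y k \<le> 2 * 2 powr (2 * (1 - \<epsilon>) * k)" unfolding tt
    using mult_left_mono[of "2 - 2 * exp (- D / 2)" 2 "2 powr (2 * (1 - \<epsilon>) * k)"] by simp
  have "D \<le> (d x y)\<^sup>2 / (2 powr k)\<^sup>2"
    unfolding D_def using \<psi>_lip[OF assms, of k]
    by (intro divide_right_mono power_mono) auto
  then have "tt x y k \<le> 2 powr (2 * (1 - \<epsilon>) * k) * ((d x y)\<^sup>2 / (2 powr k)\<^sup>2)"
    unfolding tt using e2 by (intro mult_left_mono) auto
  also have "\<dots> = (d x y)\<^sup>2 * (2 powr (2 * (1 - \<epsilon>) * k) / (2 powr k)\<^sup>2)" by simp
  also have "2 powr (2 * (1 - \<epsilon>) * k) / (2 powr k)\<^sup>2 = 2 powr (- (2 * \<epsilon>) * k)"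
  proof -
    have "(2 powr k)\<^sup>2 = 2 powr (2 * k)" by (simp add: power2_eq_square powr_add[symmetric])
    then show ?thesis by (simp add: powr_diff[symmetric] algebra_simps)
  qed
  finally show "tt x y k \<le> (d x y)\<^sup>2 * 2 powr (- (2 * \<epsilon>) * k)" .
qed

definition "Cup = 2 / (1 - 2 powr (- (2 * (1 - \<epsilon>)))) + 1 / (1 - 2 powr (- (2 * \<epsilon>)))"
definition "Clow = 2 powr (- (2 - 2 * \<epsilon>)) * (2 - 2 * exp (- 1 / (2 * K\<^sup>2)))"

lemma Clow_pos: "Clow > 0"
proof -
  have "exp (- 1 / (2 * K\<^sup>2)) < 1" using Kpos by simp
  then show ?thesis by (simp add: Clow_def)
qed

lemma tt_summable_bounds:
  assumes "x \<in> X" "y \<in> X"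
  shows "tt x y summable_on UNIV"
    "Clow * d x y powr (2 - 2 * \<epsilon>) \<le> infsum (tt x y) UNIV"
    "infsum (tt x y) UNIV \<le> Cup * d x y powr (2 - 2 * \<epsilon>)"
proof -
  have dm: "d x y \<ge> 0" "d x y = 0 \<longleftrightarrow> x = y" using met assms by (auto simp: metric_on_def)
  have all: "tt x y summable_on UNIV \<and> Clow * d x y powr (2 - 2 * \<epsilon>) \<le> infsum (tt x y) UNIV \<and>
      infsum (tt x y) UNIV \<le> Cup * d x y powr (2 - 2 * \<epsilon>)"
  proof (cases "x = y")
    case True
    then have "tt x y = (\<lambda>_. 0)" by (auto simp: tt_def)
    then show ?thesis using True dm by simp
  next
    case False
    then have dpos: "d x y > 0" using dm by auto
    have ss: "tt x y summable_on UNIV \<and> infsum (tt x y) UNIV \<le> Cup * d x y powr (2 * (1 - \<epsilon>))"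
      unfolding Cup_def
      by (rule scale_sum) (use eps dpos tt_bounds[OF assms] in auto)
    define m where "m = \<lfloor>log 2 (d x y)\<rfloor>"
    have hm1: "2 powr m \<le> d x y"
    proof -
      have "2 powr m \<le> 2 powr (log 2 (d x y))" unfolding m_def by (intro powr_mono) auto
      then show ?thesis using dpos by simp
    qed
    have hm2: "d x y < 2 powr (m + 1)"
    proof -
      have "2 powr (log 2 (d x y)) < 2 powr (m + 1)" unfolding m_def by (intro powr_less_mono) linarith+
      then show ?thesis using dpos by simp
    qed
    have low: "Clow * d x y powr (2 - 2 * \<epsilon>) \<le> tt x y m"
    proof -
      define D where "D = (norm (\<psi> m x - \<psi> m y))\<^sup>2 / (2 powr m)\<^sup>2"
      have tt: "tt x y m = 2 powr (2 * (1 - \<epsilon>) * m) * (2 - 2 * exp (- D / 2))"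
        by (simp add: tt_def D_def w_sq)
      have "2 powr m / K \<le> norm (\<psi> m x - \<psi> m y)" by (rule \<psi>_low[OF assms hm1])
      then have "(2 powr m / K)\<^sup>2 \<le> (norm (\<psi> m x - \<psi> m y))\<^sup>2"
        using Kpos by (intro power_mono) auto
      then have "(2 powr m / K)\<^sup>2 / (2 powr m)\<^sup>2 \<le> D" unfolding D_def by (intro divide_right_mono) auto
      moreover have "(2 powr m / K)\<^sup>2 / (2 powr m)\<^sup>2 = 1 / K\<^sup>2" using Kpos by (simp add: power_divide)
      ultimately have "1 / K\<^sup>2 \<le> D" by simp
      then have "exp (- D / 2) \<le> exp (- 1 / (2 * K\<^sup>2))" by simp
      then have A: "2 - 2 * exp (- 1 / (2 * K\<^sup>2)) \<le> 2 - 2 * exp (- D / 2)" by simp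
      have "d x y powr (2 - 2 * \<epsilon>) \<le> (2 powr (m + 1)) powr (2 - 2 * \<epsilon>)"
        by (rule powr_mono2) (use eps dpos hm2 in auto)
      also have "\<dots> = 2 powr (2 - 2 * \<epsilon>) * 2 powr (2 * (1 - \<epsilon>) * m)"
        by (simp add: powr_powr powr_add[symmetric] algebra_simps)
      finally have "2 powr (- (2 - 2 * \<epsilon>)) * d x y powr (2 - 2 * \<epsilon>) \<le> 2 powr (- (2 - 2 * \<epsilon>)) * (2 powr (2 - 2 * \<epsilon>) * 2 powr (2 * (1 - \<epsilon>) * m))"
        by (rule mult_left_mono) simp
      also have "\<dots> = (2 powr (- (2 - 2 * \<epsilon>)) * 2 powr (2 - 2 * \<epsilon>)) * 2 powr (2 * (1 - \<epsilon>) * m)"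
        by (simp only: mult.assoc)
      also have "2 powr (- (2 - 2 * \<epsilon>)) * 2 powr (2 - 2 * \<epsilon>) = (1::real)"
        by (simp add: powr_add[symmetric])
      finally have Bd: "2 powr (- (2 - 2 * \<epsilon>)) * d x y powr (2 - 2 * \<epsilon>) \<le> 2 powr (2 * (1 - \<epsilon>) * m)"
        by simp
      have "Clow * d x y powr (2 - 2 * \<epsilon>) = (2 powr (- (2 - 2 * \<epsilon>)) * d x y powr (2 - 2 * \<epsilon>)) * (2 - 2 * exp (- 1 / (2 * K\<^sup>2)))"
        by (simp add: Clow_def)
      also have "\<dots> \<le> 2 powr (2 * (1 - \<epsilon>) * m) * (2 - 2 * exp (- D / 2))"
        using Clow_pos by (intro mult_mono Bd A) (auto simp: Clow_def)
      finally show ?thesis using tt by simp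
    qed
    also have "tt x y m \<le> infsum (tt x y) UNIV"
      using sum_le_has_sum[OF summable_iff_has_sum_infsum[THEN iffD1, OF conjunct1[OF ss]], where F="{m}"] tt_bounds(1)[OF assms]
      by simp
    finally show ?thesis using ss by (simp add: algebra_simps)
  qed
  then show "tt x y summable_on UNIV"
    "Clow * d x y powr (2 - 2 * \<epsilon>) \<le> infsum (tt x y) UNIV"
    "infsum (tt x y) UNIV \<le> Cup * d x y powr (2 - 2 * \<epsilon>)" by auto
qed

lemma core_has_sum:
  assumes "x \<in> X" "y \<in> X"
  shows "((\<lambda>i. (Gm x i - Gm y i)\<^sup>2) has_sum infsum (tt x y) UNIV) (UNIV \<times> IX B')"
proof -
  have ts: "tt x y summable_on UNIV" by (rule tt_summable_bounds(1)[OF assms])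
  have pk: "\<And>k. k \<in> UNIV \<Longrightarrow> ((\<lambda>p. (Gm x (k, p) - Gm y (k, p))\<^sup>2) has_sum tt x y k) (IX B')"
    using per_k[OF assms] by blast
  have sm: "(\<lambda>i. (Gm x i - Gm y i)\<^sup>2) summable_on Sigma UNIV (\<lambda>_. IX B')"
    by (rule summable_on_SigmaI[OF pk ts]) auto
  have "((\<lambda>i. (Gm x i - Gm y i)\<^sup>2) has_sum infsum (tt x y) UNIV) (Sigma UNIV (\<lambda>_. IX B'))"
    by (rule has_sum_SigmaI[OF pk summable_iff_has_sum_infsum[THEN iffD1, OF ts] sm])
  then show ?thesis by simp
qed

end

lemma lip_attained:
  assumes met: "metric_on X d" and lw: "lipschitz_wrt X d f" and x: "x \<in> X" and y: "y \<in> X"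
  shows "dist (f x) (f y) \<le> lip_norm X d f * d x y"
proof -
  define S where "S = {C. 0 \<le> C \<and> (\<forall>x\<in>X. \<forall>y\<in>X. dist (f x) (f y) \<le> C * d x y)}"
  have dnn: "\<And>x y. x \<in> X \<Longrightarrow> y \<in> X \<Longrightarrow> 0 \<le> d x y" using met by (auto simp: metric_on_def)
  obtain C where C: "\<forall>x\<in>X. \<forall>y\<in>X. dist (f x) (f y) \<le> C * d x y" using lw by (auto simp: lipschitz_wrt_def)
  have "max C 0 \<in> S"
  proof -
    have "dist (f x) (f y) \<le> max C 0 * d x y" if "x \<in> X" "y \<in> X" for x y
      using C that dnn[OF that] by (smt (verit) mult_right_mono max.cobounded1)
    then show ?thesis by (auto simp: S_def)
  qed
  then have ne: "S \<noteq> {}" by blast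
  show ?thesis
  proof (cases "d x y = 0")
    case True
    then have "x = y" using met x y by (auto simp: metric_on_def)
    then show ?thesis using True by simp
  next
    case False
    then have dp: "d x y > 0" using dnn[OF x y] by simp
    have "dist (f x) (f y) / d x y \<le> Inf S"
    proof (rule cInf_greatest[OF ne])
      fix c assume "c \<in> S"
      then have "dist (f x) (f y) \<le> c * d x y" using x y by (auto simp: S_def)
      then show "dist (f x) (f y) / d x y \<le> c" using dp by (simp add: divide_le_eq)
    qed
    then show ?thesis using dp by (simp add: lip_norm_def S_def[symmetric] divide_le_eq)
  qed
qed

lemma reidx:
  fixes H :: "'i \<Rightarrow> real"
  assumes inj: "inj_on cd I" and hs: "(H has_sum s) I"
  shows "((\<lambda>j. if j \<in> cd ` I then H (inv_into I cd j) else 0) has_sum s) UNIV"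
proof -
  let ?g = "\<lambda>j. if j \<in> cd ` I then H (inv_into I cd j) else 0"
  have "((?g \<circ> cd) has_sum s) I"
    using hs by (subst has_sum_cong[where g=H]) (auto simp: inv_into_f_f[OF inj])
  then have "(?g has_sum s) (cd ` I)" using has_sum_reindex[OF inj] by blast
  then show ?thesis by (subst (asm) has_sum_cong_neutral[where T=UNIV]) auto
qed

theorem lemma5p2:
  fixes X :: "'a set" and d :: "'a \<Rightarrow> 'a \<Rightarrow> real" and \<epsilon> :: real
  assumes "metric_on X d"
    and "threshold_embeds X d TYPE('h::{real_inner, complete_space})"
    and "0 < \<epsilon>" and "\<epsilon> < 1"
  shows "\<exists>f :: 'a \<Rightarrow> ('a \<times> nat \<Rightarrow> real). bilipschitz_into_ell2 X (snowflake d (1 - \<epsilon>)) f"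
proof -
  note met = assms(1)
  obtain K and \<phi> :: "real \<Rightarrow> 'a \<Rightarrow> 'h" where Kpos: "K > 0" and th: "threshold_embeds_K X d K \<phi>"
    using assms(2) by (auto simp: threshold_embeds_def)
  have th1: "lipschitz_wrt X d (\<phi> \<tau>)" "lip_norm X d (\<phi> \<tau>) > 0"
    "\<And>x y. x \<in> X \<Longrightarrow> y \<in> X \<Longrightarrow> d x y \<ge> \<tau> \<Longrightarrow> dist (\<phi> \<tau> x) (\<phi> \<tau> y) \<ge> lip_norm X d (\<phi> \<tau>) * \<tau> / K"
    if "\<tau> > 0" for \<tau> using th that by (auto simp: threshold_embeds_K_def)
  define L where "L k = lip_norm X d (\<phi> (2 powr real_of_int k))" for k :: int
  define \<psi> where "\<psi> k x = (1 / L k) *\<^sub>R \<phi> (2 powr real_of_int k) x" for k :: int and x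
  have Lpos: "L k > 0" for k using th1(2)[of "2 powr real_of_int k"] by (simp add: L_def)
  have \<psi>norm: "norm (\<psi> k x - \<psi> k y) = dist (\<phi> (2 powr real_of_int k) x) (\<phi> (2 powr real_of_int k) y) / L k" for k x y
    using Lpos[of k] by (simp add: \<psi>_def dist_norm scaleR_diff_right[symmetric])
  have \<psi>_lip: "norm (\<psi> k x - \<psi> k y) \<le> d x y" if "x \<in> X" "y \<in> X" for k x y
  proof -
    have "dist (\<phi> (2 powr real_of_int k) x) (\<phi> (2 powr real_of_int k) y) \<le> L k * d x y"
      unfolding L_def by (rule lip_attained[OF met th1(1) that]) simp
    then show ?thesis using Lpos[of k] by (simp add: \<psi>norm divide_le_eq mult.commute)
  qed
  have \<psi>_low: "norm (\<psi> k x - \<psi> k y) \<ge> 2 powr k / K" if "x \<in> X" "y \<in> X" "d x y \<ge> 2 powr k" for k x y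
  proof -
    have "dist (\<phi> (2 powr real_of_int k) x) (\<phi> (2 powr real_of_int k) y) \<ge> L k * 2 powr k / K"
      unfolding L_def by (rule th1(3)) (use that in auto)
    then show ?thesis using Lpos[of k] by (simp add: \<psi>norm le_divide_eq mult.commute)
  qed
  obtain B :: "'h set" where mB: "maxon B" using maxon_exists by blast
  interpret C: core X d \<epsilon> K \<psi> B
    by unfold_locales (use met assms(3,4) Kpos mB \<psi>_lip \<psi>_low in auto)
  have Xne: "X \<noteq> {}"
  proof
    assume "X = {}"
    then have "{C. 0 \<le> C \<and> (\<forall>x\<in>X. \<forall>y\<in>X. dist (\<phi> 1 x) (\<phi> 1 y) \<le> C * d x y)} = {0..}" by auto
    then have "lip_norm X d (\<phi> 1) = 0" by (simp add: lip_norm_def)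
    then show False using th1(2)[of 1] by simp
  qed
  then obtain x0 where x0: "x0 \<in> X" by blast
  define Supp where "Supp k x = {b\<in>B. inner (\<psi> k x) b \<noteq> 0}" for k x
  have cSupp: "countable (Supp k x)" for k x
  proof -
    have on: "onset B" using mB by (simp add: maxon_def)
    have "countable {b\<in>B. (inner (\<psi> k x) b)\<^sup>2 \<noteq> 0}"
      by (rule summable_countable_real[OF coef_sq_summable[OF on]])
    then show ?thesis by (simp add: Supp_def)
  qed
  define sel where "sel b = (SOME kx. snd kx \<in> X \<and> inner (\<psi> (fst kx) (snd kx)) b \<noteq> 0)" for b
  have sel: "snd (sel b) \<in> X \<and> b \<in> Supp (fst (sel b)) (snd (sel b))" if bB: "b \<in> C.B'" for b
  proof -
    obtain k x where "x \<in> X" "inner (\<psi> k x) b \<noteq> 0" "b \<in> B" using bB unfolding C.B'_def by blast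
    then have "\<exists>kx. snd kx \<in> X \<and> inner (\<psi> (fst kx) (snd kx)) b \<noteq> 0" by (intro exI[of _ "(k, x)"]) auto
    then have "snd (sel b) \<in> X \<and> inner (\<psi> (fst (sel b)) (snd (sel b))) b \<noteq> 0"
      unfolding sel_def by (rule someI_ex)
    then show ?thesis using \<open>b \<in> B\<close> by (auto simp: Supp_def)
  qed
  define e where "e b = (snd (sel b), to_nat (fst (sel b), to_nat_on (Supp (fst (sel b)) (snd (sel b))) b))" for b
  have einj: "inj_on e C.B'"
  proof (rule inj_onI)
    fix b b' assume b: "b \<in> C.B'" and b': "b' \<in> C.B'" and eq: "e b = e b'"
    have 1: "snd (sel b) = snd (sel b')" using eq by (simp add: e_def)
    have "to_nat (fst (sel b), to_nat_on (Supp (fst (sel b)) (snd (sel b))) b)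
        = to_nat (fst (sel b'), to_nat_on (Supp (fst (sel b')) (snd (sel b'))) b')"
      using arg_cong[OF eq, of snd] by (simp only: e_def snd_conv)
    then have pe: "(fst (sel b), to_nat_on (Supp (fst (sel b)) (snd (sel b))) b)
        = (fst (sel b'), to_nat_on (Supp (fst (sel b')) (snd (sel b'))) b')"
      by (rule injD[OF inj_to_nat])
    have 2: "fst (sel b) = fst (sel b')" using arg_cong[OF pe, of fst] by simp
    have 3: "to_nat_on (Supp (fst (sel b)) (snd (sel b))) b = to_nat_on (Supp (fst (sel b')) (snd (sel b'))) b'"
      using arg_cong[OF pe, of snd] by simp
    have "b \<in> Supp (fst (sel b)) (snd (sel b))" "b' \<in> Supp (fst (sel b)) (snd (sel b))"
      using sel[OF b] sel[OF b'] 1 2 by auto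
    moreover have "to_nat_on (Supp (fst (sel b)) (snd (sel b))) b = to_nat_on (Supp (fst (sel b)) (snd (sel b))) b'"
      using 3 1 2 by metis
    ultimately show "b = b'" using inj_on_to_nat_on[OF cSupp] by (auto dest: inj_onD)
  qed
  obtain q :: "('a \<times> nat) \<times> ('a \<times> nat) \<Rightarrow> 'a \<times> nat" where q: "inj q" using pair_inj_exists by blast
  define I where "I = (UNIV :: int set) \<times> IX C.B'"
  define cd where "cd = code q e"
  have cdinj: "inj_on cd I" unfolding cd_def I_def IX_def by (rule code_inj[OF q einj])
  define f where "f x j = (if j \<in> cd ` I then C.Gm x (inv_into I cd j) - C.Gm x0 (inv_into I cd j) else 0)"
    for x and j :: "'a \<times> nat"
  have key: "((\<lambda>j. (f x j - f y j)\<^sup>2) has_sum infsum (C.tt x y) UNIV) UNIV" if "x \<in> X" "y \<in> X" for x y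
  proof -
    have "((\<lambda>j. if j \<in> cd ` I then (C.Gm x (inv_into I cd j) - C.Gm y (inv_into I cd j))\<^sup>2 else 0)
        has_sum infsum (C.tt x y) UNIV) UNIV"
      by (rule reidx[OF cdinj, where H="\<lambda>i. (C.Gm x i - C.Gm y i)\<^sup>2"])
         (use C.core_has_sum[OF that] in \<open>simp add: I_def\<close>)
    moreover have "(f x j - f y j)\<^sup>2 = (if j \<in> cd ` I then (C.Gm x (inv_into I cd j) - C.Gm y (inv_into I cd j))\<^sup>2 else 0)" for j
      by (simp add: f_def)
    ultimately show ?thesis by simp
  qed
  have fx0: "f x0 j = 0" for j by (simp add: f_def)
  have dist_eq: "ell2_dist (f x) (f y) = sqrt (infsum (C.tt x y) UNIV)" if "x \<in> X" "y \<in> X" for x y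
    using key[OF that] by (simp add: ell2_dist_def infsumI)
  define c where "c = sqrt C.Clow"
  define Cc where "Cc = sqrt C.Cup"
  have ell: "\<forall>x\<in>X. f x \<in> ell2"
    using has_sum_imp_summable[OF key[OF _ x0]] by (simp add: ell2_def fx0)
  have cpos: "0 < c" using C.Clow_pos by (simp add: c_def)
  have bounds: "\<forall>x\<in>X. \<forall>y\<in>X. c * snowflake d (1 - \<epsilon>) x y \<le> ell2_dist (f x) (f y) \<and>
      ell2_dist (f x) (f y) \<le> Cc * snowflake d (1 - \<epsilon>) x y"
  proof (intro ballI)
    fix x y assume x: "x \<in> X" and y: "y \<in> X"
    have dnn: "d x y \<ge> 0" using met x y by (auto simp: metric_on_def)
    have rho: "(snowflake d (1 - \<epsilon>) x y)\<^sup>2 = d x y powr (2 - 2 * \<epsilon>)"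
      using dnn by (simp add: snowflake_def powr_powr[symmetric] powr_realpow'[symmetric] power2_eq_square powr_add[symmetric])
    have rnn: "snowflake d (1 - \<epsilon>) x y \<ge> 0" by (simp add: snowflake_def)
    have "c * snowflake d (1 - \<epsilon>) x y = sqrt (C.Clow * (snowflake d (1 - \<epsilon>) x y)\<^sup>2)"
      using rnn C.Clow_pos by (simp add: c_def real_sqrt_mult)
    also have "\<dots> \<le> sqrt (infsum (C.tt x y) UNIV)"
      using C.tt_summable_bounds(2)[OF x y] by (simp add: rho)
    finally have A: "c * snowflake d (1 - \<epsilon>) x y \<le> ell2_dist (f x) (f y)" using dist_eq[OF x y] by simp
    have "sqrt (infsum (C.tt x y) UNIV) \<le> sqrt (C.Cup * (snowflake d (1 - \<epsilon>) x y)\<^sup>2)"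
      using C.tt_summable_bounds(3)[OF x y] by (simp add: rho)
    also have "\<dots> = Cc * snowflake d (1 - \<epsilon>) x y"
      using rnn by (simp add: Cc_def real_sqrt_mult)
    finally have B: "ell2_dist (f x) (f y) \<le> Cc * snowflake d (1 - \<epsilon>) x y" using dist_eq[OF x y] by simp
    show "c * snowflake d (1 - \<epsilon>) x y \<le> ell2_dist (f x) (f y) \<and>
      ell2_dist (f x) (f y) \<le> Cc * snowflake d (1 - \<epsilon>) x y" using A B by blast
  qed
  have "bilipschitz_into_ell2 X (snowflake d (1 - \<epsilon>)) f"
    unfolding bilipschitz_into_ell2_def using ell cpos bounds by blast
  then show ?thesis by blast
qed

end
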